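(* Let $n \ge m \ge r \ge 2$ be integers, $\delta\in[0,1/m]$ a real number, and $F$ an $m$-vertex $r$-graph. Suppose $t$ is a positive integer with $$t \le \min\left\{\frac{\delta m n}{r-1} - r,\ \frac{n}{m}\right\}.$$ Then every $n$-vertex $r$-graph $\mathcal{H}$ that does not contain $t+1$ pairwise vertex-disjoint copies of $F$ and satisfies $\Delta(\mathcal{H}) \le (1/m - \delta)\binom{n-1}{r-1}$ has $$|\mathcal{H}| \le \binom{n}{r} - \binom{n-t}{r} + \mathrm{ex}(n-t,F).$$
   Context: An $r$-graph is a set of $r$-element subsets (edges) of a finite vertex set; $|\mathcal{H}|$ is its number of edges and $\Delta(\mathcal{H})$ its maximum degree. $\mathrm{ex}(n,F)$ is the maximum number of edges in an $n$-vertex $r$-graph with no copy of $F$. *)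

theory Defs
  imports Complex_Main
begin

definition rgraph :: "nat \<Rightarrow> 'a set \<Rightarrow> 'a set set \<Rightarrow> bool" where
  "rgraph r V H \<longleftrightarrow> finite V \<and> (\<forall>e\<in>H. e \<subseteq> V \<and> card e = r)"

definition degree :: "'a set set \<Rightarrow> 'a \<Rightarrow> nat" where
  "degree H v = card {e \<in> H. v \<in> e}"

definition is_copy :: "'b set \<Rightarrow> 'b set set \<Rightarrow> 'a set \<Rightarrow> 'a set set \<Rightarrow> ('b \<Rightarrow> 'a) \<Rightarrow> bool" where
  "is_copy VF F V H \<phi> \<longleftrightarrow> inj_on \<phi> VF \<and> \<phi> ` VF \<subseteq> V \<and> (\<forall>e\<in>F. \<phi> ` e \<in> H)"

definition contains :: "'b set \<Rightarrow> 'b set set \<Rightarrow> 'a set \<Rightarrow> 'a set set \<Rightarrow> bool" where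
  "contains VF F V H \<longleftrightarrow> (\<exists>\<phi>. is_copy VF F V H \<phi>)"

definition has_disjoint_copies :: "nat \<Rightarrow> 'b set \<Rightarrow> 'b set set \<Rightarrow> 'a set \<Rightarrow> 'a set set \<Rightarrow> bool" where
  "has_disjoint_copies k VF F V H \<longleftrightarrow>
     (\<exists>\<phi> :: nat \<Rightarrow> 'b \<Rightarrow> 'a. (\<forall>i<k. is_copy VF F V H (\<phi> i)) \<and>
        (\<forall>i<k. \<forall>j<k. i \<noteq> j \<longrightarrow> \<phi> i ` VF \<inter> \<phi> j ` VF = {}))"

definition ex :: "nat \<Rightarrow> nat \<Rightarrow> 'b set \<Rightarrow> 'b set set \<Rightarrow> nat" where
  "ex r n VF F = Max {card H | H :: nat set set. rgraph r {0..<n} H \<and> \<not> contains VF F {0..<n} H}"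

end

theory Submission
  imports Defs
begin

lemma binom_sum:
  assumes "k \<le> N" "1 \<le> q"
  shows "(N choose q) = ((N - k) choose q) + (\<Sum>i<k. (N - 1 - i) choose (q - 1))"
  using assms(1)
proof (induction k)
  case 0 then show ?case by simp
next
  case (Suc k)
  have e: "N - k = Suc (N - Suc k)" using Suc.prems by simp
  have q: "q = Suc (q - 1)" using assms(2) by simp
  have "(N - k) choose q = ((N - Suc k) choose (q - 1)) + ((N - Suc k) choose q)"
  proof -
    obtain q' where q': "q = Suc q'" using assms(2) by (cases q) auto
    show ?thesis unfolding q' by (subst e, subst binomial_Suc_Suc) simp
  qed
  moreover have "N - 1 - k = N - Suc k" by simp
  ultimately show ?case using Suc by simp
qed

lemma key_ineq:
  fixes n r t m :: nat and \<delta> :: real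
  assumes "2 \<le> r" "r \<le> m" "m \<le> n" "0 \<le> \<delta>" "\<delta> \<le> 1 / real m" "0 < t"
    and "real t \<le> \<delta> * real m * real n / real (r - 1) - real r"
    and "t \<le> n"
  shows "real t * (1 - \<delta> * m) * real ((n - 1) choose (r - 1)) \<le> real ((n choose r) - ((n - t) choose r))"
proof -
  define D where "D = (n - 1) choose (r - 1)"
  define C where "C = (n - t) choose (r - 1)"
  define E where "E = (n - 2) choose (r - 2)"
  have s1: "(n choose r) = ((n - t) choose r) + (\<Sum>i<t. (n - 1 - i) choose (r - 1))"
    using binom_sum[of t n r] assms by simp
  have "(\<Sum>i<t. C) \<le> (\<Sum>i<t. (n - 1 - i) choose (r - 1))"
    unfolding C_def by (rule sum_mono) (rule binomial_right_mono, simp)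
  hence k1: "t * C \<le> (n choose r) - ((n - t) choose r)" using s1 by simp
  have s2: "D = C + (\<Sum>i<t-1. (n - 1 - 1 - i) choose (r - 1 - 1))"
    unfolding D_def C_def using binom_sum[of "t-1" "n-1" "r-1"] assms by simp
  have "(\<Sum>i<t-1. (n - 1 - 1 - i) choose (r - 1 - 1)) \<le> (\<Sum>i<t-1. E)"
    unfolding E_def
  proof (rule sum_mono)
    fix i assume "i \<in> {..<t-1}"
    have "r - 1 - 1 = r - 2" "n - 1 - 1 - i \<le> n - 2" by auto
    then show "(n - 1 - 1 - i) choose (r - 1 - 1) \<le> (n - 2) choose (r - 2)"
      using binomial_right_mono by metis
  qed
  hence k2: "D \<le> C + (t - 1) * E" using s2 by simp
  have k3: "(n - 1) * E = (r - 1) * D"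
  proof -
    have "Suc (n-2) * ((n-2) choose (r-2)) = (Suc (n-2) choose Suc (r-2)) * Suc (r-2)"
      by (rule Suc_times_binomial_eq)
    moreover have "Suc (n-2) = n - 1" "Suc (r-2) = r - 1" using assms by auto
    ultimately show ?thesis unfolding E_def D_def by (simp add: mult.commute)
  qed
  have n1: "real n - 1 > 0" using assms by simp
  have r1: "real (r - 1) = real r - 1" using assms by simp
  have t1: "real (t - 1) = real t - 1" using assms by simp
  have n1': "real (n - 1) = real n - 1" using assms by simp
  have rpos: "real r - 1 > 0" using assms by simp
  have hm: "\<delta> * m \<le> 1" using assms by (simp add: field_simps)
  have ht: "(real t + real r) * (real r - 1) \<le> \<delta> * m * n"
    using assms(7) rpos r1 by (simp add: field_simps)
  have hE: "(real t - 1) * (real r - 1) \<le> \<delta> * m * (real n - 1)"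
  proof -
    have "(real t - 1) * (real r - 1) = (real t + real r) * (real r - 1) - (real r + 1) * (real r - 1)" by algebra
    also have "... \<le> \<delta> * m * n - 1" using ht rpos assms(1)
      by (smt (verit) mult_le_cancel_right1 of_nat_1 of_nat_add of_nat_le_iff one_add_one)
    also have "... \<le> \<delta> * m * (real n - 1)" using hm by (simp add: algebra_simps)
    finally show ?thesis .
  qed
  have DE: "(real n - 1) * E = (real r - 1) * D"
    using arg_cong[OF k3, of real] n1' r1 by simp
  have "(real t - 1) * E * (real n - 1) \<le> \<delta> * m * D * (real n - 1)"
  proof -
    have "(real t - 1) * E * (real n - 1) = (real t - 1) * ((real n - 1) * E)" by (simp add: algebra_simps)
    also have "... = (real t - 1) * (real r - 1) * D" using DE by simp
    also have "... \<le> \<delta> * m * (real n - 1) * D" using hE by (rule mult_right_mono) simp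
    finally show ?thesis by (simp add: algebra_simps)
  qed
  hence hE2: "(real t - 1) * E \<le> \<delta> * m * D" using n1 by simp
  have "real D \<le> real C + (real t - 1) * E" using k2 t1
    by (metis of_nat_add of_nat_le_iff of_nat_mult)
  hence "(1 - \<delta> * m) * D \<le> C" using hE2 by (simp add: algebra_simps)
  hence "real t * ((1 - \<delta> * m) * D) \<le> real t * C" by (rule mult_left_mono) simp
  also have "... \<le> real ((n choose r) - ((n - t) choose r))" using k1 by (metis of_nat_le_iff of_nat_mult)
  finally show ?thesis unfolding D_def by (simp add: algebra_simps)
qed

lemma ex_upper:
  assumes "rgraph r W G" "card W = N" "\<not> contains VF F W G"
  shows "card G \<le> ex r N VF F"
proof -
  have fW: "finite W" and GW: "\<forall>e\<in>G. e \<subseteq> W \<and> card e = r" using assms(1) unfolding rgraph_def by auto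
  obtain f where bij: "bij_betw f W {0..<N}" using ex_bij_betw_finite_nat[OF fW] assms(2) by auto
  have injf: "inj_on f W" and imf: "f ` W = {0..<N}" using bij by (auto simp: bij_betw_def)
  define G2 where "G2 = image f ` G"
  have "inj_on (image f) G"
    using GW injf by (auto simp: inj_on_def inj_on_image_eq_iff)
  hence cG2: "card G2 = card G" unfolding G2_def by (rule card_image)
  have rg2: "rgraph r {0..<N} G2" unfolding rgraph_def G2_def
  proof (intro conjI ballI)
    fix e2 assume "e2 \<in> image f ` G"
    then obtain e where e: "e \<in> G" "e2 = f ` e" by auto
    show "e2 \<subseteq> {0..<N}" using e GW imf by auto
    have "inj_on f e" using e GW injf inj_on_subset by blast
    then show "card e2 = r" using e GW card_image by metis
  qed simp
  have nc2: "\<not> contains VF F {0..<N} G2"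
  proof
    assume "contains VF F {0..<N} G2"
    then obtain \<psi> where c: "is_copy VF F {0..<N} G2 \<psi>" unfolding contains_def by auto
    define g where "g = inv_into W f"
    have "is_copy VF F W G (g \<circ> \<psi>)" unfolding is_copy_def
    proof (intro conjI ballI)
      have "inj_on g (\<psi> ` VF)" unfolding g_def using c imf by (intro inj_on_inv_into) (auto simp: is_copy_def)
      then show "inj_on (g \<circ> \<psi>) VF" using c comp_inj_on unfolding is_copy_def by blast
      show "(g \<circ> \<psi>) ` VF \<subseteq> W" unfolding g_def using c imf
        by (auto simp: is_copy_def intro!: inv_into_into)
    next
      fix e assume "e \<in> F"
      then have "\<psi> ` e \<in> G2" using c unfolding is_copy_def by auto
      then obtain e' where e': "e' \<in> G" "\<psi> ` e = f ` e'" unfolding G2_def by auto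
      have "(g \<circ> \<psi>) ` e = g ` (\<psi> ` e)" by (rule image_comp[symmetric])
      also have "... = g ` f ` e'" using e' by simp
      also have "... = e'" unfolding g_def using inv_into_image_cancel[OF injf] e' GW by auto
      finally show "(g \<circ> \<psi>) ` e \<in> G" using e' by simp
    qed
    then show False using assms(3) unfolding contains_def by blast
  qed
  define S where "S = {card H | H :: nat set set. rgraph r {0..<N} H \<and> \<not> contains VF F {0..<N} H}"
  have "S \<subseteq> card ` Pow (Pow {0..<N})" unfolding S_def rgraph_def by auto
  hence fS: "finite S" by (rule finite_subset) simp
  have "card G2 \<in> S" unfolding S_def using rg2 nc2 by blast
  hence "card G2 \<le> Max S" using fS by simp
  then show ?thesis using cG2 unfolding ex_def S_def by simp
qed

lemma copy_mono:
  "is_copy VF F A G \<phi> \<Longrightarrow> A \<subseteq> B \<Longrightarrow> G \<subseteq> G' \<Longrightarrow> is_copy VF F B G' \<phi>"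
  unfolding is_copy_def by blast

lemma free_extend:
  assumes "rgraph r VF F" "card VF \<le> card A" "A \<subseteq> B" "finite B" "\<forall>e\<in>G. e \<subseteq> A"
    "\<not> contains VF F A G"
  shows "\<not> contains VF F B G"
proof
  assume "contains VF F B G"
  then obtain \<phi> where c: "is_copy VF F B G \<phi>" unfolding contains_def by auto
  have fVF: "finite VF" and FV: "\<forall>e\<in>F. e \<subseteq> VF" using assms(1) unfolding rgraph_def by auto
  have fA: "finite A" by (rule finite_subset[OF assms(3,4)])
  define N where "N = \<Union>F"
  have NV: "N \<subseteq> VF" using FV unfolding N_def by auto
  have injN: "inj_on \<phi> N" using c NV inj_on_subset unfolding is_copy_def by blast
  have phN: "\<phi> ` N \<subseteq> A"
  proof
    fix y assume "y \<in> \<phi> ` N"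
    then obtain x e where "e \<in> F" "x \<in> e" "y = \<phi> x" unfolding N_def by auto
    moreover then have "\<phi> ` e \<in> G" using c unfolding is_copy_def by auto
    ultimately show "y \<in> A" using assms(5) by blast
  qed
  define I where "I = VF - N"
  have fN: "finite N" by (rule finite_subset[OF NV fVF])
  have cI: "card I = card VF - card N" unfolding I_def using NV fN by (simp add: card_Diff_subset)
  have cR: "card (A - \<phi> ` N) = card A - card N"
    using phN fN card_Diff_subset[OF finite_imageI[OF fN] phN] card_image[OF injN] by simp
  have "card I \<le> card (A - \<phi> ` N)" using cI cR assms(2) by simp
  then obtain f where f: "f ` I \<subseteq> A - \<phi> ` N" "inj_on f I"
    using card_le_inj[of I "A - \<phi> ` N"] fVF fA unfolding I_def by auto
  define \<psi> where "\<psi> x = (if x \<in> N then \<phi> x else f x)" for x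
  have "is_copy VF F A G \<psi>" unfolding is_copy_def
  proof (intro conjI ballI)
    show "inj_on \<psi> VF"
    proof (rule inj_onI)
      fix x y assume xy: "x \<in> VF" "y \<in> VF" "\<psi> x = \<psi> y"
      show "x = y"
      proof (cases "x \<in> N"; cases "y \<in> N")
        assume "x \<in> N" "y \<in> N" then show ?thesis using xy injN unfolding \<psi>_def by (auto dest: inj_onD)
      next
        assume "x \<in> N" "y \<notin> N" then show ?thesis using xy f unfolding \<psi>_def I_def by auto
      next
        assume "x \<notin> N" "y \<in> N" then show ?thesis using xy f unfolding \<psi>_def I_def by force
      next
        assume "x \<notin> N" "y \<notin> N" then show ?thesis using xy f unfolding \<psi>_def I_def by (auto dest: inj_onD)
      qed
    qed
    show "\<psi> ` VF \<subseteq> A" using phN f unfolding \<psi>_def I_def by auto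
  next
    fix e assume e: "e \<in> F"
    then have "e \<subseteq> N" unfolding N_def by auto
    then have "\<psi> ` e = \<phi> ` e" unfolding \<psi>_def by auto
    then show "\<psi> ` e \<in> G" using c e unfolding is_copy_def by auto
  qed
  then show False using assms(6) unfolding contains_def by blast
qed

lemma double_count:
  assumes "finite V" "finite H" "\<forall>e\<in>H. e \<subseteq> V"
  shows "(\<Sum>v\<in>V. degree H v) = (\<Sum>e\<in>H. card e)"
proof -
  have "(\<Sum>v\<in>V. degree H v) = (\<Sum>v\<in>V. \<Sum>e\<in>H. if v \<in> e then 1 else 0)"
    unfolding degree_def using assms by (simp add: sum.inter_filter[symmetric])
  also have "... = (\<Sum>e\<in>H. \<Sum>v\<in>V. if v \<in> e then 1 else 0)" by (rule sum.swap)
  also have "... = (\<Sum>e\<in>H. card e)"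
  proof (rule sum.cong)
    fix e assume "e \<in> H"
    then have "{v \<in> V. v \<in> e} = e" using assms by auto
    then show "(\<Sum>v\<in>V. if v \<in> e then 1 else 0) = card e"
      using assms sum.inter_filter[of V "\<lambda>_. 1::nat" "\<lambda>v. v \<in> e"] by simp
  qed simp
  finally show ?thesis .
qed


theorem lemma3p1:
  fixes n m r t :: nat and \<delta> :: real
    and VF :: "'b set" and F :: "'b set set"
    and V :: "'a set" and H :: "'a set set"
  assumes "2 \<le> r" and "r \<le> m" and "m \<le> n"
    and "0 \<le> \<delta>" and "\<delta> \<le> 1 / real m"
    and "rgraph r VF F" and "card VF = m" and "F \<noteq> {}"
    and "0 < t"
    and "real t \<le> \<delta> * real m * real n / real (r - 1) - real r"
    and "real t \<le> real n / real m"
    and "rgraph r V H" and "card V = n"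
    and "\<not> has_disjoint_copies (t + 1) VF F V H"
    and "\<forall>v\<in>V. real (degree H v) \<le> (1 / real m - \<delta>) * real ((n - 1) choose (r - 1))"
  shows "card H \<le> (n choose r) - ((n - t) choose r) + ex r (n - t) VF F"
proof -
  define D where "D = (n - 1) choose (r - 1)"
  define K where "K = (n choose r) - ((n - t) choose r)"
  have fV: "finite V" and HV: "\<forall>e\<in>H. e \<subseteq> V \<and> card e = r" using assms(12) unfolding rgraph_def by auto
  have fH: "finite H" using HV fV by (intro finite_subset[of H "Pow V"]) auto
  have fVF: "finite VF" using assms(6) unfolding rgraph_def by auto
  have mpos: "real m > 0" using assms(1,2) by simp
  have tm: "real t * real m \<le> real n" using assms(11) mpos by (simp add: field_simps)
  have "t * m \<le> n" using tm by (metis of_nat_le_iff of_nat_mult)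
  moreover have "t \<le> t * m" using assms(1,2) by simp
  ultimately have tn: "t \<le> n" by linarith
  have dm: "\<delta> * m \<le> 1" using assms(5) mpos by (simp add: field_simps)
  have KEY: "real t * (1 - \<delta> * m) * D \<le> real K"
    unfolding D_def K_def using key_ineq[OF assms(1-5,9,10) tn] .
  have degb: "\<forall>v\<in>V. real (degree H v) \<le> (1 - \<delta> * m) / m * D"
    using assms(15) mpos unfolding D_def by (simp add: field_simps)
  show ?thesis
  proof (cases "n < (t + 1) * m")
    case True
    define X where "X = (1 - \<delta> * m) * real D"
    have X0: "X \<ge> 0" unfolding X_def using dm by simp
    have "real (\<Sum>v\<in>V. degree H v) = (\<Sum>v\<in>V. real (degree H v))" by (rule of_nat_sum)
    also have "... \<le> (\<Sum>v\<in>V. (1 - \<delta> * m) / m * D)"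
      by (rule sum_mono) (use degb in blast)
    also have "... = real n * ((1 - \<delta> * m) / m * D)" using assms(13) by simp
    also have "... = real n / m * X" unfolding X_def by simp
    finally have s1: "real (\<Sum>v\<in>V. degree H v) \<le> real n / m * X" .
    have "(\<Sum>v\<in>V. degree H v) = (\<Sum>e\<in>H. card e)" using double_count[OF fV fH] HV by blast
    also have "... = (\<Sum>e\<in>H. r)" by (rule sum.cong) (use HV in auto)
    also have "... = r * card H" by simp
    finally have "real r * real (card H) \<le> real n / m * X" using s1
      by (metis of_nat_mult)
    moreover have "real n / m \<le> real t + 1"
    proof -
      have "n \<le> (t + 1) * m" using True by simp
      hence "real n \<le> (real t + 1) * m" by (metis of_nat_1 of_nat_add of_nat_le_iff of_nat_mult)
      thus ?thesis using mpos by (simp add: divide_le_eq)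
    qed
    moreover have "real t + 1 \<le> real r * real t"
    proof -
      have "2 * t \<le> r * t" using assms(1) by (rule mult_le_mono1)
      hence "t + 1 \<le> r * t" using assms(9) by linarith
      thus ?thesis by (metis of_nat_1 of_nat_add of_nat_le_iff of_nat_mult)
    qed
    ultimately have "real n / m * X \<le> (real r * real t) * X"
      using X0 by (intro mult_right_mono) auto
    have "real r * real (card H) \<le> real r * (real t * X)"
      using \<open>real r * real (card H) \<le> real n / m * X\<close> \<open>real n / m * X \<le> (real r * real t) * X\<close>
      by (simp add: mult.assoc)
    hence "real (card H) \<le> real t * X" using assms(1) by simp
    also have "... \<le> real K" using KEY unfolding X_def by (simp add: mult.assoc)
    finally have "card H \<le> K" by simp
    then show ?thesis unfolding K_def by simp
  next
    case False
    define P where "P s = has_disjoint_copies s VF F V H" for s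
    define S where "S = {s. s \<le> t \<and> P s}"
    have "P 0" unfolding P_def has_disjoint_copies_def by simp
    hence "0 \<in> S" unfolding S_def by simp
    have fS: "finite S" unfolding S_def by simp
    define s0 where "s0 = Max S"
    have "s0 \<in> S" unfolding s0_def using fS \<open>0 \<in> S\<close> Max_in by blast
    hence s0t: "s0 \<le> t" and Ps0: "P s0" unfolding S_def by auto
    have nPs: "\<not> P (s0 + 1)"
    proof
      assume a: "P (s0 + 1)"
      show False
      proof (cases "s0 + 1 \<le> t")
        case True
        then have "s0 + 1 \<in> S" using a unfolding S_def by simp
        then show False using fS unfolding s0_def
          by (metis Max_ge add_le_same_cancel1 not_one_le_zero)
      next
        case False
        then have "s0 = t" using s0t by simp
        then show False using a assms(14) unfolding P_def by simp
      qed
    qed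
    obtain \<phi> where phc: "\<forall>i<s0. is_copy VF F V H (\<phi> i)"
      and phd: "\<forall>i<s0. \<forall>j<s0. i \<noteq> j \<longrightarrow> \<phi> i ` VF \<inter> \<phi> j ` VF = {}"
      using Ps0 unfolding P_def has_disjoint_copies_def by blast
    define U where "U = (\<Union>i<s0. \<phi> i ` VF)"
    have UV: "U \<subseteq> V" using phc unfolding U_def is_copy_def by auto
    have "card U = (\<Sum>i<s0. card (\<phi> i ` VF))"
      unfolding U_def using phd fVF by (intro card_UN_disjoint) auto
    also have "... = (\<Sum>i<s0. m)"
      using phc assms(7) by (intro sum.cong) (auto simp: is_copy_def card_image)
    finally have cU: "card U = s0 * m" by simp
    have fU: "finite U" by (rule finite_subset[OF UV fV])
    have cVU: "card (V - U) = n - s0 * m" using cU UV fU assms(13) by (simp add: card_Diff_subset)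
    define H' where "H' = {e\<in>H. e \<subseteq> V - U}"
    have free: "\<not> contains VF F (V - U) H'"
    proof
      assume "contains VF F (V - U) H'"
      then obtain \<psi> where ps: "is_copy VF F (V - U) H' \<psi>" unfolding contains_def by auto
      define \<phi>' where "\<phi>' = \<phi>(s0 := \<psi>)"
      have "P (s0 + 1)" unfolding P_def has_disjoint_copies_def
      proof (intro exI[of _ \<phi>'] conjI allI impI)
        fix i assume "i < s0 + 1"
        then show "is_copy VF F V H (\<phi>' i)"
          using phc copy_mono[OF ps, of V H] unfolding \<phi>'_def H'_def
          by (cases "i = s0") auto
      next
        fix i j assume ij: "i < s0 + 1" "j < s0 + 1" "i \<noteq> j"
        have pU: "\<psi> ` VF \<subseteq> V - U" using ps unfolding is_copy_def by auto
        have iU: "k < s0 \<Longrightarrow> \<phi> k ` VF \<subseteq> U" for k unfolding U_def by auto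
        show "\<phi>' i ` VF \<inter> \<phi>' j ` VF = {}"
        proof (cases "i = s0")
          case True
          then have "j < s0" using ij by simp
          then show ?thesis using True pU iU[of j] unfolding \<phi>'_def by auto
        next
          case False
          then have i0: "i < s0" using ij by simp
          show ?thesis
          proof (cases "j = s0")
            case True
            then show ?thesis using i0 pU iU[of i] unfolding \<phi>'_def by auto
          next
            case False
            then show ?thesis using i0 ij phd unfolding \<phi>'_def by auto
          qed
        qed
      qed
      then show False using nPs by simp
    qed
    show ?thesis
    proof (cases "s0 * m \<le> t")
      case True
      have "n - t \<le> card (V - U)" using cVU True by simp
      then obtain W where W: "W \<subseteq> V - U" "card W = n - t" "finite W"
        by (rule obtain_subset_with_card_n)
      define HW where "HW = {e\<in>H. e \<subseteq> W}"
      have rW: "rgraph r W HW" unfolding rgraph_def HW_def using W HV by auto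
      have ncW: "\<not> contains VF F W HW"
      proof
        assume "contains VF F W HW"
        then obtain \<psi> where pc: "is_copy VF F W HW \<psi>" unfolding contains_def by auto
        have HWs: "HW \<subseteq> H'" unfolding HW_def H'_def using W by auto
        have "is_copy VF F (V - U) H' \<psi>" by (rule copy_mono[OF pc W(1) HWs])
        then show False using free unfolding contains_def by blast
      qed
      have c1: "card HW \<le> ex r (n - t) VF F" by (rule ex_upper[OF rW W(2) ncW])
      have sub: "H - HW \<subseteq> {e. e \<subseteq> V \<and> card e = r} - {e. e \<subseteq> W \<and> card e = r}"
        unfolding HW_def using HV by auto
      have WV: "W \<subseteq> V" using W by auto
      define Big where "Big = {e. e \<subseteq> V \<and> card e = r}"
      define Sm where "Sm = {e. e \<subseteq> W \<and> card e = r}"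
      have cB0: "card Big = card V choose r" unfolding Big_def by (rule n_subsets[OF fV])
      have cB: "card Big = n choose r" using cB0 by (simp only: assms(13))
      have cS: "card Sm = (n - t) choose r" unfolding Sm_def W(2)[symmetric] by (rule n_subsets[OF W(3)])
      have SB: "Sm \<subseteq> Big" unfolding Sm_def Big_def using WV by auto
      have fB: "finite Big" unfolding Big_def by (rule finite_subset[of _ "Pow V"]) (use fV in auto)
      have fSm: "finite Sm" by (rule finite_subset[OF SB fB])
      have "card (Big - Sm) = card Big - card Sm" by (rule card_Diff_subset[OF fSm SB])
      hence cBS: "card (Big - Sm) = K" unfolding K_def cB[symmetric] cS[symmetric] .
      have "card (H - HW) \<le> card (Big - Sm)"
        by (rule card_mono) (use fB sub in \<open>auto simp: Big_def Sm_def\<close>)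
      hence c2: "card (H - HW) \<le> K" using cBS by simp
      have "card (HW \<union> (H - HW)) \<le> card HW + card (H - HW)" by (rule card_Un_le)
      moreover have "HW \<union> (H - HW) = H" unfolding HW_def by auto
      ultimately have "card H \<le> card HW + card (H - HW)" by simp
      then show ?thesis using c1 c2 unfolding K_def by simp
    next
      case False
      have sm: "s0 * m \<le> t * m" using s0t by simp
      have nb: "t * m + m \<le> n" using \<open>\<not> n < (t + 1) * m\<close> by (simp add: algebra_simps)
      have mle: "m \<le> card (V - U)" unfolding cVU using sm nb by linarith
      have "s0 * m - t \<le> card U" using cU by simp
      then obtain X where X: "X \<subseteq> U" "card X = s0 * m - t" "finite X"
        by (rule obtain_subset_with_card_n)
      define W where "W = (V - U) \<union> X"
      have fW: "finite W" unfolding W_def using fV X by simp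
      have "card W = card (V - U) + card X" unfolding W_def
        using X fV by (intro card_Un_disjoint) auto
      hence cW: "card W = n - t" unfolding cVU X(2) using False sm nb by linarith
      have VUW: "V - U \<subseteq> W" unfolding W_def by blast
      have H'VU: "\<forall>e\<in>H'. e \<subseteq> V - U" unfolding H'_def by blast
      have cVF: "card VF \<le> card (V - U)" using assms(7) mle by simp
      have free2: "\<not> contains VF F W H'"
        by (rule free_extend[OF assms(6) cVF VUW fW H'VU free])
      have WV: "W \<subseteq> V" unfolding W_def using X UV by blast
      have rW: "rgraph r W H'" unfolding rgraph_def
      proof (intro conjI ballI)
        fix e assume "e \<in> H'"
        then show "e \<subseteq> W" using H'VU VUW by blast
        show "card e = r" using \<open>e \<in> H'\<close> HV unfolding H'_def by blast
      qed (rule fW)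
      have c1: "card H' \<le> ex r (n - t) VF F" by (rule ex_upper[OF rW cW free2])
      have sub: "H - H' \<subseteq> (\<Union>v\<in>U. {e\<in>H. v \<in> e})" unfolding H'_def using HV by blast
      have fUn: "finite (\<Union>v\<in>U. {e\<in>H. v \<in> e})"
        by (rule finite_subset[OF _ fH]) blast
      have "card (H - H') \<le> card (\<Union>v\<in>U. {e\<in>H. v \<in> e})"
        by (rule card_mono[OF fUn sub])
      also have "... \<le> (\<Sum>v\<in>U. card {e\<in>H. v \<in> e})" by (rule card_UN_le[OF fU])
      also have "... = (\<Sum>v\<in>U. degree H v)" unfolding degree_def by (rule refl)
      finally have "card (H - H') \<le> (\<Sum>v\<in>U. degree H v)" .
      hence "real (card (H - H')) \<le> real (\<Sum>v\<in>U. degree H v)" by (rule of_nat_mono)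
      also have "... = (\<Sum>v\<in>U. real (degree H v))" by (rule of_nat_sum)
      also have "... \<le> (\<Sum>v\<in>U. (1 - \<delta> * m) / m * D)"
        by (rule sum_mono) (use degb UV in blast)
      also have "... = real (card U) * ((1 - \<delta> * m) / m * D)" by simp
      also have "... = real s0 * (1 - \<delta> * m) * D" unfolding cU using mpos by simp
      also have "... \<le> real t * (1 - \<delta> * m) * D"
        using s0t dm by (intro mult_right_mono) auto
      also have "... \<le> real K" by (rule KEY)
      finally have c2: "card (H - H') \<le> K" by (rule of_nat_le_iff[THEN iffD1])
      have "card (H' \<union> (H - H')) \<le> card H' + card (H - H')" by (rule card_Un_le)
      moreover have "H' \<union> (H - H') = H" unfolding H'_def by auto
      ultimately have "card H \<le> card H' + card (H - H')" by simp
      then show ?thesis using c1 c2 unfolding K_def by simp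
    qed
  qed
qed

end
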